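(* Let $S$ be a finite set of polyhedra in $\mathbb{R}^3$ and let $\Pi$ be the (finite) set of planes containing faces of polyhedra in $S$. For each $R\in\Pi$, the lines $R\cap R'$, for $R'\in\Pi$ not parallel to $R$, subdivide $R$; call the connected components of the complement in $R$ of the union of these lines the cells of $R$ (these are open convex subsets of $R$, some bounded and some unbounded). Then there exists $\varepsilon>0$ with the following property. Let $M$ be any finite set of point-plane markers such that each $(p,R)\in M$ has $p$ on a face $F$ of a polyhedron of $S$ with $R$ the plane of $F$, and such that for every face $F$ and every point $x\in F$ there is a marker $(p,R)\in M$ with $p\in F$, $R$ the plane of $F$, and $|x-p|<\varepsilon$. Then the set of planes $\{R:(p,R)\in M\}$ equals $\Pi$, and the union of all faces of all polyhedra of $S$ equals the union of the closures of those bounded cells $C$ of planes $R\in\Pi$ for which there is a marker $(p,R)\in M$ with $p\in C$. In particular the scene is unambiguously reconstructed from the marker data.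
   Context: A polygon is a closed, connected, two-dimensional region of a plane whose boundary consists of finitely many segments (edges) with endpoints (vertices), each vertex being an endpoint of two edges and two edges meeting only in a vertex. A polyhedron is a closed, connected, three-dimensional region of $\mathbb{R}^3$ whose boundary consists of finitely many polygons (faces) such that every edge of every face is shared with exactly one other face, two faces intersect only in shared edges or vertices, and the faces sharing a vertex can be cyclically ordered so that consecutive faces share an edge. Faces are taken to be maximal: the closures of the connected components of the set of points of $\partial P$ having a neighbourhood in $\partial P$ contained in a single plane. A point-plane marker is a pair $(p,R)$ with $R$ a plane in $\mathbb{R}^3$ and $p\in R$. *)

theory Defs
  imports "HOL-Analysis.Analysis"
begin

type_synonym point = "real ^ 3"

definition is_plane :: "point set \<Rightarrow> bool" where
  "is_plane H \<longleftrightarrow> (\<exists>a b. a \<noteq> 0 \<and> H = {x. a \<bullet> x = b})"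

text \<open>Q is a polygon whose boundary (relative to its plane) is decomposed into the
  edges E; an edge is given by the two-element set of its endpoints.\<close>
definition polygon_with :: "point set \<Rightarrow> point set set \<Rightarrow> bool" where
  "polygon_with Q E \<longleftrightarrow>
     compact Q \<and> connected Q \<and> aff_dim Q = 2 \<and> Q = closure (rel_interior Q) \<and>
     finite E \<and> (\<forall>e\<in>E. card e = 2) \<and>
     rel_frontier Q = \<Union> ((\<lambda>e. convex hull e) ` E) \<and>
     (\<forall>v\<in>\<Union>E. card {e\<in>E. v \<in> e} = 2) \<and>
     (\<forall>e1\<in>E. \<forall>e2\<in>E. e1 \<noteq> e2 \<longrightarrow> convex hull e1 \<inter> convex hull e2 \<subseteq> e1 \<inter> e2)"

definition polyhedron :: "point set \<Rightarrow> bool" where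
  "polyhedron P \<longleftrightarrow>
     compact P \<and> connected P \<and> interior P \<noteq> {} \<and> P = closure (interior P) \<and>
     (\<exists>(F :: point set set) (edg :: point set \<Rightarrow> point set set).
        finite F \<and> (\<forall>Q\<in>F. polygon_with Q (edg Q)) \<and>
        frontier P = \<Union> F \<and>
        (\<forall>Q\<in>F. \<forall>e\<in>edg Q. \<exists>!Q'. Q' \<in> F \<and> Q' \<noteq> Q \<and> e \<in> edg Q') \<and>
        (\<forall>Q\<in>F. \<forall>Q'\<in>F. Q \<noteq> Q' \<longrightarrow>
            Q \<inter> Q' \<subseteq> \<Union> ((\<lambda>e. convex hull e) ` (edg Q \<inter> edg Q')) \<union>
                      (\<Union>(edg Q) \<inter> \<Union>(edg Q'))) \<and>
        (\<forall>v. let Fv = {Q\<in>F. v \<in> \<Union>(edg Q)} in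
             Fv \<noteq> {} \<longrightarrow>
             (\<exists>qs. distinct qs \<and> set qs = Fv \<and>
                 (\<forall>i<length qs. edg (qs ! i) \<inter> edg (qs ! ((i + 1) mod length qs)) \<noteq> {}))))"

definition flat_points :: "point set \<Rightarrow> point set" where
  "flat_points P = {x \<in> frontier P. \<exists>U H. open U \<and> x \<in> U \<and> is_plane H \<and> U \<inter> frontier P \<subseteq> H}"

definition faces :: "point set \<Rightarrow> point set set" where
  "faces P = closure ` components (flat_points P)"

definition plane_of :: "point set \<Rightarrow> point set" where
  "plane_of F = affine hull F"

definition scene_planes :: "point set set \<Rightarrow> point set set" where
  "scene_planes S = {plane_of F | P F. P \<in> S \<and> F \<in> faces P}"

definition parallel_planes :: "point set \<Rightarrow> point set \<Rightarrow> bool" where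
  "parallel_planes R R' \<longleftrightarrow> (\<exists>v. R' = (\<lambda>x. v + x) ` R)"

definition cells :: "point set set \<Rightarrow> point set \<Rightarrow> point set set" where
  "cells Pl R = components (R - \<Union>{R \<inter> R' | R'. R' \<in> Pl \<and> \<not> parallel_planes R R'})"

end

theory Submission
  imports Defs
begin

lemma plane_props:
  assumes "is_plane H"
  shows "affine H" "closed H" "convex H" "aff_dim H = 2" "affine hull H = H"
  using assms unfolding is_plane_def
  by (auto simp: affine_hyperplane closed_hyperplane convex_hyperplane)

lemma plane_unique:
  assumes "is_plane H1" "is_plane H2" "z \<in> H1" "\<delta> > 0" "ball z \<delta> \<inter> H1 \<subseteq> H2"
  shows "H1 = H2"
proof -
  have "affine hull (H1 \<inter> ball z \<delta>) = H1"
  proof -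
    have "H1 \<inter> ball z \<delta> \<noteq> {}" using assms(3,4) by auto
    then show ?thesis using affine_hull_convex_Int_open[of H1 "ball z \<delta>"] plane_props[OF assms(1)] by simp
  qed
  moreover have "affine hull (H1 \<inter> ball z \<delta>) \<subseteq> H2"
    using assms(5) plane_props[OF assms(2)] by (metis hull_minimal inf_commute)
  ultimately have s: "H1 \<subseteq> H2" by simp
  have "aff_dim H1 = aff_dim H2" using plane_props assms by simp
  then have "affine hull H1 = affine hull H2" using aff_dim_eq_full_gen[OF s] by simp
  then show ?thesis using plane_props assms by simp
qed

lemma aff_dim2_plane:
  fixes Q :: "point set"
  assumes "aff_dim Q = 2" shows "is_plane (affine hull Q)"
  using aff_dim_eq_hyperplane[of Q] assms unfolding is_plane_def by auto

lemma approx_side: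
  fixes a z y :: point
  assumes "a \<noteq> 0" "a \<bullet> z = b" "z \<in> ball y r" "e > 0"
  shows "\<exists>w. w \<in> ball y r \<and> dist z w < e \<and> a \<bullet> w > b"
proof -
  define d where "d = min e (r - dist y z) / 2"
  have d: "d > 0" "d < e" "d < r - dist y z" using assms by (auto simp: d_def)
  define t where "t = d / norm a"
  have t: "t > 0" using d assms by (simp add: t_def)
  define w where "w = z + t *\<^sub>R a"
  have dw: "dist z w = d" using assms t d by (simp add: w_def dist_norm t_def)
  have "dist y w \<le> dist y z + dist z w" by (rule dist_triangle)
  then have "dist y w < r" using dw d by simp
  moreover have "a \<bullet> w = b + t * (a \<bullet> a)" using assms by (simp add: w_def inner_add_right)
  moreover have "t * (a \<bullet> a) > 0" using t assms by simp
  ultimately show ?thesis using dw d by (intro exI[of _ w]) auto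
qed

lemma approx_side2:
  fixes a z y :: point
  assumes "a \<noteq> 0" "a \<bullet> z = b" "z \<in> ball y r" "e > 0"
  shows "\<exists>w. w \<in> ball y r \<and> dist z w < e \<and> a \<bullet> w < b"
  using approx_side[of "-a" z "-b" y r e] assms by auto

lemma half_lemma:
  fixes P :: "point set"
  assumes cl: "closed P" and ci: "P = closure (interior P)" and yf: "y \<in> frontier P"
    and a: "a \<noteq> 0" and yb: "a \<bullet> y = b" and r: "r > 0"
    and sub: "ball y r \<inter> frontier P \<subseteq> {x. a \<bullet> x = b}"
  shows "ball y r \<inter> {x. a \<bullet> x = b} \<subseteq> frontier P"
proof -
  define Bp where "Bp = ball y r \<inter> {x. a \<bullet> x > b}"
  define Bm where "Bm = ball y r \<inter> {x. a \<bullet> x < b}"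
  have cBp: "connected Bp" unfolding Bp_def
    by (intro convex_connected convex_Int convex_ball convex_halfspace_gt)
  have cBm: "connected Bm" unfolding Bm_def
    by (intro convex_connected convex_Int convex_ball convex_halfspace_lt)
  have fBp: "Bp \<inter> frontier P = {}" using sub by (auto simp: Bp_def)
  have fBm: "Bm \<inter> frontier P = {}" using sub by (auto simp: Bm_def)
  have p: "Bp \<subseteq> P \<or> Bp \<inter> P = {}" using connected_Int_frontier[OF cBp, of P] fBp by blast
  have m: "Bm \<subseteq> P \<or> Bm \<inter> P = {}" using connected_Int_frontier[OF cBm, of P] fBm by blast
  have apx: "\<And>z e. z \<in> ball y r \<Longrightarrow> a \<bullet> z = b \<Longrightarrow> e > 0 \<Longrightarrow> (\<exists>w\<in>Bp. dist z w < e) \<and> (\<exists>w\<in>Bm. dist z w < e)"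
    using approx_side[OF a] approx_side2[OF a] unfolding Bp_def Bm_def by blast
  have yP: "y \<in> P" using yf cl by (meson frontier_subset_closed subsetD)
  have yni: "y \<notin> interior P" using yf by (simp add: frontier_def)
  show ?thesis
  proof (cases "Bp \<subseteq> P")
    case True
    note bp = True
    show ?thesis
    proof (cases "Bm \<subseteq> P")
      case True
      have "ball y r \<subseteq> P"
      proof
        fix x assume x: "x \<in> ball y r"
        consider "a \<bullet> x > b" | "a \<bullet> x < b" | "a \<bullet> x = b" by linarith
        then show "x \<in> P"
        proof cases
          case 1 then have "x \<in> Bp" using x by (simp add: Bp_def)
          then show ?thesis using bp by blast
        next
          case 2 then have "x \<in> Bm" using x by (simp add: Bm_def)
          then show ?thesis using True by blast
        next
          case 3
          have "x \<in> closure P"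
            unfolding closure_approachable
          proof (intro allI impI)
            fix e :: real assume "e > 0"
            then obtain w where "w \<in> Bp" "dist x w < e" using apx[OF x 3] by blast
            then show "\<exists>y\<in>P. dist y x < e" using bp by (metis dist_commute subsetD)
          qed
          then show ?thesis using cl by simp
        qed
      qed
      then have "y \<in> interior P" using r by (meson centre_in_ball interior_maximal open_ball subsetD)
      then show ?thesis using yni by simp
    next
      case False
      then have bm: "Bm \<inter> P = {}" using m by simp
      show ?thesis
      proof
        fix z assume z: "z \<in> ball y r \<inter> {x. a \<bullet> x = b}"
        show "z \<in> frontier P" unfolding frontier_straddle
        proof (intro allI impI conjI)
          fix e :: real assume e: "e > 0"
          show "\<exists>x\<in>P. dist z x < e" using apx[of z e] z e bp by blast
          show "\<exists>x. x \<notin> P \<and> dist z x < e" using apx[of z e] z e bm by blast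
        qed
      qed
    qed
  next
    case False
    then have bp: "Bp \<inter> P = {}" using p by simp
    show ?thesis
    proof (cases "Bm \<subseteq> P")
      case True
      note bm = True
      show ?thesis
      proof
        fix z assume z: "z \<in> ball y r \<inter> {x. a \<bullet> x = b}"
        show "z \<in> frontier P" unfolding frontier_straddle
        proof (intro allI impI conjI)
          fix e :: real assume e: "e > 0"
          show "\<exists>x\<in>P. dist z x < e" using apx[of z e] z e bm by blast
          show "\<exists>x. x \<notin> P \<and> dist z x < e" using apx[of z e] z e bp by blast
        qed
      qed
    next
      case False
      then have bm: "Bm \<inter> P = {}" using m by simp
      have "y \<in> closure (interior P)" using yP ci by simp
      then obtain w where w: "w \<in> interior P" "dist y w < r"
        using r unfolding closure_approachable by (metis dist_commute)
      then have wb: "w \<in> ball y r" by simp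
      have "w \<in> P" using w interior_subset by blast
      then have "a \<bullet> w = b" using bp bm wb unfolding Bp_def Bm_def by (metis IntI empty_iff linorder_neqE_linordered_idom mem_Collect_eq)
      obtain e where e: "e > 0" "ball w e \<subseteq> P" using w(1) by (meson mem_interior)
      then obtain w' where "w' \<in> Bp" "dist w w' < e" using apx[OF wb \<open>a \<bullet> w = b\<close> e(1)] by blast
      then show ?thesis using e bp by auto
    qed
  qed
qed

definition GG :: "point set \<Rightarrow> point \<Rightarrow> point set \<Rightarrow> real \<Rightarrow> bool" where
  "GG P z H r \<longleftrightarrow> r > 0 \<and> is_plane H \<and> ball z r \<inter> frontier P = ball z r \<inter> H"

lemma flat_G:
  fixes P :: "point set"
  assumes "closed P" "P = closure (interior P)" "z \<in> flat_points P"
  shows "\<exists>H r. GG P z H r"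
proof -
  obtain U H where U: "open U" "z \<in> U" "is_plane H" "U \<inter> frontier P \<subseteq> H" and zf: "z \<in> frontier P"
    using assms(3) unfolding flat_points_def by blast
  obtain r where r: "r > 0" "ball z r \<subseteq> U" using U by (meson open_contains_ball)
  obtain a b where ab: "a \<noteq> 0" "H = {x. a \<bullet> x = b}" using U(3) unfolding is_plane_def by blast
  have zH: "a \<bullet> z = b" using U zf ab by blast
  have s1: "ball z r \<inter> frontier P \<subseteq> {x. a \<bullet> x = b}" using r U ab by blast
  have "ball z r \<inter> {x. a \<bullet> x = b} \<subseteq> frontier P"
    using half_lemma[OF assms(1,2) zf ab(1) zH r(1) s1] .
  then have "ball z r \<inter> frontier P = ball z r \<inter> H" using s1 ab by blast
  then have "GG P z H r" using r U unfolding GG_def by blast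
  then show ?thesis by blast
qed

lemma G_flat:
  assumes "GG P z H r" shows "ball z r \<inter> frontier P \<subseteq> flat_points P"
proof
  fix w assume w: "w \<in> ball z r \<inter> frontier P"
  have "open (ball z r)" "w \<in> ball z r" "is_plane H" "ball z r \<inter> frontier P \<subseteq> H"
    using assms w unfolding GG_def by auto
  then show "w \<in> flat_points P" unfolding flat_points_def using w by blast
qed

lemma G_mono:
  assumes "GG P z H r" "w \<in> ball z r" shows "\<exists>r'. GG P w H r'"
proof -
  define r' where "r' = r - dist z w"
  have r': "r' > 0" using assms(2) by (simp add: r'_def)
  have sub: "ball w r' \<subseteq> ball z r"
  proof
    fix x assume "x \<in> ball w r'"
    then have "dist w x < r - dist z w" by (simp add: r'_def)
    moreover have "dist z x \<le> dist z w + dist w x" by (rule dist_triangle)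
    ultimately show "x \<in> ball z r" by simp
  qed
  have "ball w r' \<inter> frontier P = ball w r' \<inter> H"
    using assms(1) sub unfolding GG_def by blast
  then show ?thesis using r' assms(1) unfolding GG_def by blast
qed

lemma G_in: "GG P z H r \<Longrightarrow> z \<in> frontier P \<Longrightarrow> z \<in> H"
  unfolding GG_def by (metis IntD2 IntI centre_in_ball)

lemma G_unique:
  assumes "z \<in> frontier P" "GG P z H1 r1" "GG P z H2 r2" shows "H1 = H2"
proof -
  define r where "r = min r1 r2"
  have r: "r > 0" using assms unfolding GG_def r_def by simp
  have "ball z r \<inter> H1 \<subseteq> H2"
  proof
    fix x assume x: "x \<in> ball z r \<inter> H1"
    then have "x \<in> ball z r1 \<inter> H1" "x \<in> ball z r2" by (auto simp: r_def)
    then have "x \<in> ball z r2 \<inter> frontier P" using assms(2) unfolding GG_def by blast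
    then show "x \<in> H2" using assms(3) unfolding GG_def by blast
  qed
  then show ?thesis using plane_unique[of H1 H2 z r] G_in[OF assms(2,1)] r assms unfolding GG_def by blast
qed

lemma component_plane:
  fixes P :: "point set"
  assumes cl: "closed P" and ci: "P = closure (interior P)" and K: "K \<in> components (flat_points P)"
  shows "\<exists>H. is_plane H \<and> (\<forall>z\<in>K. \<exists>r. GG P z H r) \<and> K \<subseteq> H \<and>
            (\<forall>z\<in>K. \<exists>r>0. ball z r \<inter> H \<subseteq> K) \<and> affine hull (closure K) = H"
proof -
  have Kf: "K \<subseteq> flat_points P" using K by (rule in_components_subset)
  have ffr: "flat_points P \<subseteq> frontier P" unfolding flat_points_def by blast
  obtain z0 where z0: "z0 \<in> K" using in_components_nonempty[OF K] by blast
  obtain H0 r0 where H0: "GG P z0 H0 r0" using flat_G[OF cl ci] z0 Kf by blast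
  define T where "T = {z\<in>K. \<exists>r. GG P z H0 r}"
  have "openin (top_of_set K) T"
    unfolding openin_open
  proof (intro exI conjI)
    show "open (\<Union>{ball z r | z r. GG P z H0 r})" by auto
    show "T = K \<inter> \<Union>{ball z r | z r. GG P z H0 r}"
    proof
      show "T \<subseteq> K \<inter> \<Union>{ball z r | z r. GG P z H0 r}"
      proof
        fix x assume "x \<in> T"
        then obtain r where "x \<in> K" "GG P x H0 r" unfolding T_def by blast
        moreover have "x \<in> ball x r" using calculation unfolding GG_def by simp
        ultimately show "x \<in> K \<inter> \<Union>{ball z r | z r. GG P z H0 r}" by blast
      qed
      show "K \<inter> \<Union>{ball z r | z r. GG P z H0 r} \<subseteq> T"
      proof
        fix w assume "w \<in> K \<inter> \<Union>{ball z r | z r. GG P z H0 r}"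
        then obtain z r where "w \<in> K" "w \<in> ball z r" "GG P z H0 r" by blast
        then show "w \<in> T" unfolding T_def using G_mono by blast
      qed
    qed
  qed
  moreover have "openin (top_of_set K) (K - T)"
    unfolding openin_open
  proof (intro exI conjI)
    show "open (\<Union>{ball z r | z r. \<exists>H. H \<noteq> H0 \<and> GG P z H r})" by auto
    show "K - T = K \<inter> \<Union>{ball z r | z r. \<exists>H. H \<noteq> H0 \<and> GG P z H r}"
    proof
      show "K - T \<subseteq> K \<inter> \<Union>{ball z r | z r. \<exists>H. H \<noteq> H0 \<and> GG P z H r}"
      proof
        fix w assume w: "w \<in> K - T"
        then obtain H r where "GG P w H r" using flat_G[OF cl ci] Kf by blast
        moreover have "H \<noteq> H0" using w calculation unfolding T_def by blast
        moreover have "w \<in> ball w r" using calculation unfolding GG_def by simp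
        ultimately show "w \<in> K \<inter> \<Union>{ball z r | z r. \<exists>H. H \<noteq> H0 \<and> GG P z H r}"
          using w by blast
      qed
      show "K \<inter> \<Union>{ball z r | z r. \<exists>H. H \<noteq> H0 \<and> GG P z H r} \<subseteq> K - T"
      proof
        fix w assume "w \<in> K \<inter> \<Union>{ball z r | z r. \<exists>H. H \<noteq> H0 \<and> GG P z H r}"
        then obtain z r H where w: "w \<in> K" "w \<in> ball z r" "H \<noteq> H0" "GG P z H r" by blast
        then obtain r' where r': "GG P w H r'" using G_mono by blast
        have wf: "w \<in> frontier P" using w Kf ffr by blast
        have "w \<notin> T"
        proof
          assume "w \<in> T"
          then obtain r'' where "GG P w H0 r''" unfolding T_def by blast
          then show False using G_unique[OF wf r'] w by blast
        qed
        then show "w \<in> K - T" using w by blast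
      qed
    qed
  qed
  then have "closedin (top_of_set K) T"
    unfolding closedin_def by (auto simp: T_def)
  ultimately have TK: "T = K"
    using in_components_connected[OF K] z0 H0 unfolding connected_clopen T_def by blast
  then have G: "\<forall>z\<in>K. \<exists>r. GG P z H0 r" unfolding T_def by blast
  have KH: "K \<subseteq> H0" using G G_in Kf ffr by blast
  have op: "\<forall>z\<in>K. \<exists>r>0. ball z r \<inter> H0 \<subseteq> K"
  proof
    fix z assume z: "z \<in> K"
    then obtain r where r: "GG P z H0 r" using G by blast
    have "ball z r \<inter> H0 \<subseteq> flat_points P" using G_flat[OF r] r unfolding GG_def by blast
    moreover have "connected (ball z r \<inter> H0)"
      using r plane_props(3)[of H0] unfolding GG_def by (intro convex_connected convex_Int) auto
    moreover have "K \<inter> (ball z r \<inter> H0) \<noteq> {}" using z KH r unfolding GG_def by auto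
    ultimately have "ball z r \<inter> H0 \<subseteq> K" using components_maximal[OF K] by blast
    then show "\<exists>r>0. ball z r \<inter> H0 \<subseteq> K" using r unfolding GG_def by blast
  qed
  have pl: "is_plane H0" using H0 unfolding GG_def by blast
  have "affine hull (closure K) \<subseteq> H0"
    using KH plane_props[OF pl] by (meson closure_minimal hull_minimal)
  moreover have "H0 \<subseteq> affine hull (closure K)"
  proof -
    obtain r where r: "r > 0" "ball z0 r \<inter> H0 \<subseteq> K" using op z0 by blast
    have "H0 \<inter> ball z0 r \<noteq> {}" using r z0 KH by auto
    then have "affine hull (H0 \<inter> ball z0 r) = H0"
      using affine_hull_convex_Int_open[of H0 "ball z0 r"] plane_props[OF pl] by simp
    moreover have "affine hull (H0 \<inter> ball z0 r) \<subseteq> affine hull (closure K)"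
      using r closure_subset by (intro hull_mono) blast
    ultimately show ?thesis by simp
  qed
  ultimately have eq: "affine hull (closure K) = H0" by (rule antisym)
  show ?thesis by (rule exI[of _ H0], intro conjI, fact pl, fact G, fact KH, fact op, fact eq)
qed

lemma flat_intro:
  assumes "y \<in> frontier P" "open U" "y \<in> U" "is_plane H" "U \<inter> frontier P \<subseteq> H"
  shows "y \<in> flat_points P"
  unfolding flat_points_def mem_Collect_eq
  apply (rule conjI)
   apply (rule assms(1))
  apply (rule exI[of _ U])
  apply (rule exI[of _ H])
  using assms by simp

lemma polygon_props1: "polygon_with Q E \<Longrightarrow> closed Q"
  unfolding polygon_with_def by (elim conjE, rule compact_imp_closed, assumption)
lemma polygon_props2: "polygon_with Q E \<Longrightarrow> aff_dim Q = 2"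
  unfolding polygon_with_def by (elim conjE, assumption)
lemma polygon_props3: "polygon_with Q E \<Longrightarrow> Q = closure (rel_interior Q)"
  unfolding polygon_with_def by (elim conjE, assumption)
lemma polygon_props4: "polygon_with Q E \<Longrightarrow> rel_frontier Q = \<Union> ((\<lambda>e. convex hull e) ` E)"
  unfolding polygon_with_def by (elim conjE, assumption)
lemmas polygon_props = polygon_props1 polygon_props2 polygon_props3 polygon_props4

lemma avoid_closed:
  fixes S :: "point set"
  assumes "closed S" "y \<notin> S" shows "\<exists>e>0. ball y e \<inter> S = {}"
proof -
  have "open (- S)" using assms(1) by (simp add: open_Compl)
  then obtain e where "e > 0" "ball y e \<subseteq> - S" using assms(2) open_contains_ball by blast
  then show ?thesis by blast
qed

lemma poly_struct:
  assumes "polyhedron P"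
  shows "\<exists>Fs. finite Fs \<and> frontier P = \<Union>Fs \<and>
     (\<forall>Q\<in>Fs. closed Q \<and> aff_dim Q = 2 \<and> Q = closure (rel_interior Q)) \<and>
     (\<forall>Q\<in>Fs. \<forall>Q'\<in>Fs. Q \<noteq> Q' \<longrightarrow> rel_interior Q \<inter> Q' = {})"
proof -
  obtain Fs edg where fin: "finite Fs" and pw: "\<forall>Q\<in>Fs. polygon_with Q (edg Q)"
    and fr: "frontier P = \<Union>Fs"
    and int: "\<forall>Q\<in>Fs. \<forall>Q'\<in>Fs. Q \<noteq> Q' \<longrightarrow>
            Q \<inter> Q' \<subseteq> \<Union> ((\<lambda>e. convex hull e) ` (edg Q \<inter> edg Q')) \<union>
                      (\<Union>(edg Q) \<inter> \<Union>(edg Q'))"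
    using assms unfolding polyhedron_def apply -
    apply (elim conjE exE) apply (rule that) apply assumption+ done
  have a: "\<forall>Q\<in>Fs. closed Q \<and> aff_dim Q = 2 \<and> Q = closure (rel_interior Q)"
    using pw polygon_props1 polygon_props2 polygon_props3 by blast
  have b: "rel_interior Q \<inter> Q' = {}" if "Q \<in> Fs" "Q' \<in> Fs" "Q \<noteq> Q'" for Q Q'
  proof -
    have rf: "rel_frontier Q = \<Union> ((\<lambda>e. convex hull e) ` edg Q)"
      using pw that polygon_props(4) by blast
    have "\<Union>(edg Q) \<subseteq> rel_frontier Q" unfolding rf using hull_subset by fastforce
    moreover have "\<Union> ((\<lambda>e. convex hull e) ` (edg Q \<inter> edg Q')) \<subseteq> rel_frontier Q" unfolding rf by blast
    moreover have "Q \<inter> Q' \<subseteq> \<Union> ((\<lambda>e. convex hull e) ` (edg Q \<inter> edg Q')) \<union>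
                      (\<Union>(edg Q) \<inter> \<Union>(edg Q'))"
      using bspec[OF bspec[OF int that(1)] that(2)] that(3) by (rule mp)
    ultimately have "Q \<inter> Q' \<subseteq> rel_frontier Q" by (meson Int_lower1 le_sup_iff order_trans)
    moreover have "rel_interior Q \<subseteq> Q" by (rule rel_interior_subset)
    ultimately show ?thesis unfolding rel_frontier_def by blast
  qed
  have b': "\<forall>Q\<in>Fs. \<forall>Q'\<in>Fs. Q \<noteq> Q' \<longrightarrow> rel_interior Q \<inter> Q' = {}" using b by blast
  show ?thesis by (rule exI[of _ Fs], intro conjI, fact fin, fact fr, fact a, fact b')
qed

lemma poly_basic:
  assumes "polyhedron P"
  shows "closed P" "P = closure (interior P)" "compact P"
proof -
  show c: "compact P" using assms unfolding polyhedron_def apply - by (elim conjE, assumption)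
  then show "closed P" by (rule compact_imp_closed)
  show "P = closure (interior P)" using assms unfolding polyhedron_def apply - by (elim conjE, assumption)
qed

lemma face_facts:
  assumes P: "polyhedron P" and F: "F \<in> faces P"
  shows "\<exists>K. K \<in> components (flat_points P) \<and> F = closure K \<and> is_plane (plane_of F) \<and>
     (\<forall>z\<in>K. \<exists>r. GG P z (plane_of F) r) \<and> K \<subseteq> plane_of F \<and>
     (\<forall>z\<in>K. \<exists>r>0. ball z r \<inter> plane_of F \<subseteq> K) \<and> F \<subseteq> frontier P \<and> compact F \<and> F \<noteq> {}"
proof -
  obtain K where K: "K \<in> components (flat_points P)" "F = closure K"
    using F unfolding faces_def by blast
  obtain H where H: "is_plane H" "\<forall>z\<in>K. \<exists>r. GG P z H r" "K \<subseteq> H"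
     "\<forall>z\<in>K. \<exists>r>0. ball z r \<inter> H \<subseteq> K" "affine hull (closure K) = H"
    using component_plane[OF poly_basic(1,2)[OF P] K(1)] by blast
  have pf: "plane_of F = H" using H K by (simp add: plane_of_def)
  have "K \<subseteq> frontier P" using in_components_subset[OF K(1)] unfolding flat_points_def by blast
  then have Ffr: "F \<subseteq> frontier P" using K by (simp add: closure_minimal)
  have "compact (frontier P)" using poly_basic(3)[OF P] by (simp add: compact_frontier)
  then have "bounded K" using \<open>K \<subseteq> frontier P\<close> by (meson bounded_subset compact_imp_bounded)
  then have "compact F" using K(2) by (simp add: compact_closure)
  moreover have "F \<noteq> {}" using K in_components_nonempty by auto
  ultimately show ?thesis using K H pf Ffr by auto
qed

lemma nonflat_line:
  assumes P: "polyhedron P" and yf: "y \<in> frontier P" and ynf: "y \<notin> flat_points P"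
    and R: "is_plane R"
  shows "\<exists>F'\<in>faces P. y \<in> plane_of F' \<and> plane_of F' \<noteq> R"
proof -
  obtain Fs where fin: "finite Fs" and fr: "frontier P = \<Union>Fs"
     and a: "\<forall>Q\<in>Fs. closed Q \<and> aff_dim Q = 2 \<and> Q = closure (rel_interior Q)"
     and b: "\<forall>Q\<in>Fs. \<forall>Q'\<in>Fs. Q \<noteq> Q' \<longrightarrow> rel_interior Q \<inter> Q' = {}"
    using poly_struct[OF P] apply -
    apply (elim exE conjE) apply (rule that) apply assumption+ done
  have "\<exists>Q\<in>Fs. y \<in> Q \<and> \<not> Q \<subseteq> R"
  proof (rule ccontr)
    assume na: "\<not> (\<exists>Q\<in>Fs. y \<in> Q \<and> \<not> Q \<subseteq> R)"
    define A where "A = {Q\<in>Fs. y \<notin> Q}"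
    have "closed (\<Union>A)" using fin a unfolding A_def by (intro closed_Union) auto
    moreover have "y \<notin> \<Union>A" unfolding A_def by blast
    ultimately obtain e where e: "e > 0" "ball y e \<inter> \<Union>A = {}"
      using avoid_closed by blast
    have "ball y e \<inter> frontier P \<subseteq> R"
    proof
      fix x assume x: "x \<in> ball y e \<inter> frontier P"
      then obtain Q where Q: "Q \<in> Fs" "x \<in> Q" using fr by blast
      then have "Q \<notin> A" using x e by blast
      then have "y \<in> Q" using Q unfolding A_def by blast
      then show "x \<in> R" using na Q by blast
    qed
    moreover have "y \<in> ball y e" using e by simp
    ultimately have "y \<in> flat_points P" using flat_intro[OF yf open_ball _ R] by blast
    then show False using ynf by blast
  qed
  then obtain Q where Q: "Q \<in> Fs" "y \<in> Q" "\<not> Q \<subseteq> R" by blast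
  define H where "H = affine hull Q"
  have Hp: "is_plane H" unfolding H_def using a Q aff_dim2_plane by blast
  have QH: "Q \<subseteq> H" unfolding H_def by (rule hull_subset)
  have "rel_interior Q \<noteq> {}" using a Q by (metis closure_empty empty_iff)
  then obtain z where z: "z \<in> rel_interior Q" by blast
  then obtain e1 where e1: "e1 > 0" "ball z e1 \<inter> H \<subseteq> Q"
    unfolding H_def mem_rel_interior_ball by blast
  have zQ: "z \<in> Q" using z rel_interior_subset by blast
  have "closed (\<Union>(Fs - {Q}))" using fin a by (intro closed_Union) auto
  moreover have "z \<notin> \<Union>(Fs - {Q})" using b Q z by blast
  ultimately obtain e2 where e2: "e2 > 0" "ball z e2 \<inter> \<Union>(Fs - {Q}) = {}"
    using avoid_closed by blast
  define \<rho> where "\<rho> = min e1 e2"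
  have rho: "\<rho> > 0" using e1 e2 by (simp add: \<rho>_def)
  have Ufr: "ball z \<rho> \<inter> frontier P \<subseteq> H"
  proof
    fix x assume x: "x \<in> ball z \<rho> \<inter> frontier P"
    then obtain Q' where Q': "Q' \<in> Fs" "x \<in> Q'" using fr by blast
    have "Q' = Q" using e2 x Q' by (auto simp: \<rho>_def)
    then show "x \<in> H" using Q' QH by blast
  qed
  have zf: "z \<in> frontier P" using zQ Q fr by blast
  have "z \<in> ball z \<rho>" using rho by simp
  then have zflat: "z \<in> flat_points P" using flat_intro[OF zf open_ball _ Hp Ufr] by blast
  define K' where "K' = connected_component_set (flat_points P) z"
  have K': "K' \<in> components (flat_points P)" using zflat unfolding K'_def components_iff by blast
  have zK': "z \<in> K'" using zflat unfolding K'_def by simp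
  have F': "closure K' \<in> faces P" using K' unfolding faces_def by blast
  obtain K'' where K'': "K'' \<in> components (flat_points P)" "closure K' = closure K''"
     "\<forall>z\<in>K''. \<exists>r. GG P z (plane_of (closure K')) r"
     "is_plane (plane_of (closure K'))"
    using face_facts[OF P F'] by blast
  obtain H' where H': "is_plane H'" "\<forall>z\<in>K'. \<exists>r. GG P z H' r" "affine hull (closure K') = H'"
    using component_plane[OF poly_basic(1,2)[OF P] K'] by blast
  obtain r' where r': "GG P z H' r'" using H' zK' by blast
  define s where "s = min r' \<rho>"
  have s: "s > 0" using r' rho unfolding GG_def s_def by simp
  have "ball z s \<inter> H' \<subseteq> H"
  proof
    fix x assume x: "x \<in> ball z s \<inter> H'"
    then have "x \<in> ball z r' \<inter> H'" by (auto simp: s_def)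
    then have "x \<in> frontier P" using r' unfolding GG_def by blast
    moreover have "x \<in> ball z \<rho>" using x by (auto simp: s_def)
    ultimately show "x \<in> H" using Ufr by blast
  qed
  then have "H' = H" using plane_unique[OF H'(1) Hp G_in[OF r' zf] s] by blast
  then have "plane_of (closure K') = H" using H' by (simp add: plane_of_def)
  moreover have "H \<noteq> R" using Q QH by blast
  moreover have "y \<in> H" using Q QH by blast
  ultimately show ?thesis using F' by blast
qed

definition pa :: "point set \<Rightarrow> point \<times> real" where
  "pa R = (SOME p. fst p \<noteq> 0 \<and> R = {x. fst p \<bullet> x = snd p})"

lemma pa_prop:
  assumes "is_plane R" shows "fst (pa R) \<noteq> 0" "R = {x. fst (pa R) \<bullet> x = snd (pa R)}"
proof -
  obtain a b where "a \<noteq> 0" "R = {x. a \<bullet> x = b}" using assms unfolding is_plane_def by blast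
  then have "\<exists>p. fst p \<noteq> 0 \<and> R = {x. fst p \<bullet> x = snd p}" by (intro exI[of _ "(a,b)"]) simp
  then have "fst (pa R) \<noteq> 0 \<and> R = {x. fst (pa R) \<bullet> x = snd (pa R)}"
    unfolding pa_def by (rule someI_ex)
  then show "fst (pa R) \<noteq> 0" "R = {x. fst (pa R) \<bullet> x = snd (pa R)}" by blast+
qed

lemma pa_mem: "is_plane R \<Longrightarrow> x \<in> R \<longleftrightarrow> fst (pa R) \<bullet> x = snd (pa R)"
  using pa_prop(2) by blast

lemma parallel_meet:
  assumes R: "is_plane R" and par: "parallel_planes R H" and y: "y \<in> R" "y \<in> H"
  shows "R = H"
proof -
  obtain v where v: "H = (\<lambda>x. v + x) ` R" using par unfolding parallel_planes_def by blast
  define n where "n = fst (pa R)"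
  define b where "b = snd (pa R)"
  have mem: "\<And>x. x \<in> R \<longleftrightarrow> n \<bullet> x = b" using pa_mem[OF R] unfolding n_def b_def by blast
  obtain r where r: "r \<in> R" "y = v + r" using v y by blast
  have "n \<bullet> v = 0" using mem r y by (simp add: inner_add_right)
  then have "\<And>x. v + x \<in> R \<longleftrightarrow> x \<in> R" using mem by (simp add: inner_add_right)
  then show ?thesis using v by (auto simp: image_iff) (metis add_diff_cancel_left' diff_add_cancel)
qed

definition LL :: "point set set \<Rightarrow> point set \<Rightarrow> point set" where
  "LL Pl R = \<Union>{R \<inter> R' | R'. R' \<in> Pl \<and> \<not> parallel_planes R R'}"

lemma cells_LL: "cells Pl R = components (R - LL Pl R)"
  unfolding cells_def LL_def by simp

lemma LL_mem: "y \<in> LL Pl R \<longleftrightarrow> (\<exists>R'\<in>Pl. \<not> parallel_planes R R' \<and> y \<in> R \<and> y \<in> R')"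
  unfolding LL_def by blast

lemma LL_closed:
  assumes "finite Pl" "\<forall>R'\<in>Pl. is_plane R'" "is_plane R"
  shows "closed (LL Pl R)"
proof -
  have "LL Pl R = (\<Union>R'\<in>{R'\<in>Pl. \<not> parallel_planes R R'}. R \<inter> R')" unfolding LL_def by blast
  moreover have "closed (\<Union>R'\<in>{R'\<in>Pl. \<not> parallel_planes R R'}. R \<inter> R')"
    using assms plane_props(2) by (intro closed_UN) auto
  ultimately show ?thesis by simp
qed

lemma cell_basic:
  assumes "C \<in> cells Pl R" shows "connected C" "C \<subseteq> R - LL Pl R" "C \<noteq> {}"
  using assms unfolding cells_LL
  by (auto dest: in_components_connected in_components_subset in_components_nonempty)

lemma cell_open:
  assumes "finite Pl" "\<forall>R'\<in>Pl. is_plane R'" "is_plane R" "C \<in> cells Pl R" "c \<in> C"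
  shows "\<exists>\<delta>>0. ball c \<delta> \<inter> R \<subseteq> C"
proof -
  have cl: "closed (LL Pl R)" using LL_closed assms by blast
  have cR: "c \<in> R - LL Pl R" using cell_basic(2)[OF assms(4)] assms(5) by blast
  then obtain d where d: "d > 0" "ball c d \<inter> LL Pl R = {}" using avoid_closed[OF cl] by blast
  have "ball c d \<inter> R \<subseteq> R - LL Pl R" using d by blast
  moreover have "connected (ball c d \<inter> R)"
    using plane_props(3)[OF assms(3)] by (intro convex_connected convex_Int convex_ball)
  moreover have "C \<inter> (ball c d \<inter> R) \<noteq> {}" using assms(5) cR d by auto
  ultimately have "ball c d \<inter> R \<subseteq> C"
    using components_maximal[of C "R - LL Pl R"] assms(4) unfolding cells_LL by blast
  then show ?thesis using d by blast
qed

lemma cell_exists: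
  assumes "y \<in> R - LL Pl R" shows "\<exists>C\<in>cells Pl R. y \<in> C"
proof -
  have "connected_component_set (R - LL Pl R) y \<in> components (R - LL Pl R)"
    unfolding components_iff using assms by blast
  moreover have "y \<in> connected_component_set (R - LL Pl R) y" using assms by simp
  ultimately show ?thesis unfolding cells_LL by blast
qed

lemma cells_finite:
  assumes fin: "finite Pl" and pl: "\<forall>R'\<in>Pl. is_plane R'" and R: "is_plane R"
  shows "finite (cells Pl R)"
proof -
  define N where "N = {R'\<in>Pl. \<not> parallel_planes R R'}"
  define A where "A = (\<lambda>R'. fst (pa R'))"
  define B where "B = (\<lambda>R'. snd (pa R'))"
  have memN: "\<And>R' x. R' \<in> N \<Longrightarrow> x \<in> R' \<longleftrightarrow> A R' \<bullet> x = B R'"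
    using pa_mem pl unfolding N_def A_def B_def by blast
  have notL: "\<And>w. w \<in> R \<Longrightarrow> w \<notin> LL Pl R \<longleftrightarrow> (\<forall>R'\<in>N. A R' \<bullet> w \<noteq> B R')"
    unfolding LL_mem using memN unfolding N_def by blast
  define \<sigma> where "\<sigma> = (\<lambda>w. {R'\<in>N. A R' \<bullet> w > B R'})"
  define reg where "reg = (\<lambda>S. {w \<in> R - LL Pl R. \<sigma> w = S})"
  have key: "C = reg (\<sigma> c)" if C: "C \<in> cells Pl R" and c: "c \<in> C" for C c
  proof
    have CR: "C \<subseteq> R - LL Pl R" using cell_basic(2)[OF C] .
    have cC: "connected C" using cell_basic(1)[OF C] .
    show "C \<subseteq> reg (\<sigma> c)"
    proof
      fix w assume w: "w \<in> C"
      have "\<sigma> w = \<sigma> c"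
      proof -
        have "(A R' \<bullet> w > B R') = (A R' \<bullet> c > B R')" if R': "R' \<in> N" for R'
        proof (rule ccontr)
          assume ne: "(A R' \<bullet> w > B R') \<noteq> (A R' \<bullet> c > B R')"
          have nw: "A R' \<bullet> w \<noteq> B R'" using notL CR w R' by blast
          have nc: "A R' \<bullet> c \<noteq> B R'" using notL CR c R' by blast
          have "\<exists>z\<in>C. A R' \<bullet> z = B R'"
          proof (cases "A R' \<bullet> w > B R'")
            case True
            then have "A R' \<bullet> c \<le> B R'" using ne by linarith
            then show ?thesis using connected_ivt_hyperplane[OF cC c w] True by simp
          next
            case False
            then have "A R' \<bullet> w \<le> B R'" "B R' \<le> A R' \<bullet> c" using ne nw by linarith+
            then show ?thesis using connected_ivt_hyperplane[OF cC w c] by simp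
          qed
          then obtain z where "z \<in> C" "A R' \<bullet> z = B R'" by blast
          then show False using notL[of z] CR R' by blast
        qed
        then show ?thesis unfolding \<sigma>_def by blast
      qed
      then show "w \<in> reg (\<sigma> c)" using w CR unfolding reg_def by blast
    qed
    show "reg (\<sigma> c) \<subseteq> C"
    proof -
      define I where "I = (\<lambda>R'. if R' \<in> \<sigma> c then {x. A R' \<bullet> x > B R'} else {x. A R' \<bullet> x < B R'})"
      have eq: "reg (\<sigma> c) = R \<inter> \<Inter>(I ` N)"
      proof
        show "reg (\<sigma> c) \<subseteq> R \<inter> \<Inter>(I ` N)"
        proof
          fix w assume w: "w \<in> reg (\<sigma> c)"
          then have wR: "w \<in> R" "w \<notin> LL Pl R" "\<sigma> w = \<sigma> c" unfolding reg_def by auto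
          have "w \<in> I R'" if RN: "R' \<in> N" for R'
          proof -
            have ne: "A R' \<bullet> w \<noteq> B R'" using wR notL[of w] RN by blast
            have iff: "R' \<in> \<sigma> w \<longleftrightarrow> R' \<in> \<sigma> c" using wR(3) by simp
            show ?thesis
            proof (cases "R' \<in> \<sigma> c")
              case True
              then have "A R' \<bullet> w > B R'" using iff unfolding \<sigma>_def by blast
              then show ?thesis using True unfolding I_def by simp
            next
              case False
              then have "\<not> A R' \<bullet> w > B R'" using iff RN unfolding \<sigma>_def by blast
              then have "A R' \<bullet> w < B R'" using ne by linarith
              then show ?thesis using False unfolding I_def by simp
            qed
          qed
          then show "w \<in> R \<inter> \<Inter>(I ` N)" using wR by blast
        qed
        show "R \<inter> \<Inter>(I ` N) \<subseteq> reg (\<sigma> c)"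
        proof
          fix w assume w: "w \<in> R \<inter> \<Inter>(I ` N)"
          have wI: "\<And>R'. R' \<in> N \<Longrightarrow> w \<in> I R'" using w by blast
          have "\<forall>R'\<in>N. A R' \<bullet> w \<noteq> B R'"
          proof
            fix R' assume "R' \<in> N"
            then show "A R' \<bullet> w \<noteq> B R'" using wI[of R'] unfolding I_def by (auto split: if_splits)
          qed
          then have "w \<notin> LL Pl R" using notL w by blast
          moreover have "\<sigma> w = \<sigma> c"
          proof -
            have "R' \<in> \<sigma> w \<longleftrightarrow> R' \<in> \<sigma> c" for R'
            proof (cases "R' \<in> N")
              case True
              then show ?thesis using wI[OF True] unfolding I_def \<sigma>_def by (auto split: if_splits)
            next
              case False then show ?thesis unfolding \<sigma>_def by blast
            qed
            then show ?thesis by blast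
          qed
          ultimately show "w \<in> reg (\<sigma> c)" using w unfolding reg_def by blast
        qed
      qed
      have "convex (R \<inter> \<Inter>(I ` N))"
        using plane_props(3)[OF R] unfolding I_def
        by (intro convex_Int convex_INT) (auto simp: convex_halfspace_gt convex_halfspace_lt)
      then have "connected (reg (\<sigma> c))" using eq by (simp add: convex_connected)
      moreover have "reg (\<sigma> c) \<subseteq> R - LL Pl R" unfolding reg_def by blast
      moreover have "C \<inter> reg (\<sigma> c) \<noteq> {}" using c CR unfolding reg_def by blast
      ultimately show ?thesis using components_maximal[of C "R - LL Pl R"] C unfolding cells_LL by blast
    qed
  qed
  have "cells Pl R \<subseteq> reg ` Pow N"
  proof
    fix C assume C: "C \<in> cells Pl R"
    then obtain c where "c \<in> C" using cell_basic(3) by blast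
    then have "C = reg (\<sigma> c)" using key C by blast
    moreover have "\<sigma> c \<in> Pow N" unfolding \<sigma>_def by blast
    ultimately show "C \<in> reg ` Pow N" by blast
  qed
  moreover have "finite N" using fin unfolding N_def by simp
  ultimately show ?thesis by (meson finite_Pow_iff finite_imageI finite_subset)
qed

lemma proj_le:
  fixes u n :: point
  assumes "n \<noteq> 0"
  shows "norm (u - ((n \<bullet> u) / (n \<bullet> n)) *\<^sub>R n) \<le> norm u"
proof -
  define t where "t = (n \<bullet> u) / (n \<bullet> n)"
  have nn: "n \<bullet> n \<noteq> 0" using assms by simp
  have "(u - t *\<^sub>R n) \<bullet> (t *\<^sub>R n) = t * (n \<bullet> u) - t * t * (n \<bullet> n)"
    by (simp add: inner_diff_left inner_commute algebra_simps)
  also have "\<dots> = 0" using nn by (simp add: t_def)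
  finally have "orthogonal (u - t *\<^sub>R n) (t *\<^sub>R n)" unfolding orthogonal_def .
  then have "(norm u)\<^sup>2 = (norm (u - t *\<^sub>R n))\<^sup>2 + (norm (t *\<^sub>R n))\<^sup>2"
    using norm_add_Pythagorean[of "u - t *\<^sub>R n" "t *\<^sub>R n"] by simp
  then have "(norm (u - t *\<^sub>R n))\<^sup>2 \<le> (norm u)\<^sup>2" by simp
  then show ?thesis unfolding t_def by (simp add: power_mono_iff)
qed

lemma nonparallel_nz:
  assumes R: "is_plane R" and R': "is_plane R'" and np: "\<not> parallel_planes R R'"
  shows "fst (pa R') - ((fst (pa R') \<bullet> fst (pa R)) / (fst (pa R) \<bullet> fst (pa R))) *\<^sub>R fst (pa R) \<noteq> 0"
proof
  define n where "n = fst (pa R)"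
  define b where "b = snd (pa R)"
  define a where "a = fst (pa R')"
  define b' where "b' = snd (pa R')"
  define k where "k = (a \<bullet> n) / (n \<bullet> n)"
  assume "fst (pa R') - ((fst (pa R') \<bullet> fst (pa R)) / (fst (pa R) \<bullet> fst (pa R))) *\<^sub>R fst (pa R) = 0"
  then have a: "a = k *\<^sub>R n" unfolding a_def k_def n_def by simp
  have a0: "a \<noteq> 0" using pa_prop(1)[OF R'] unfolding a_def .
  have n0: "n \<noteq> 0" using pa_prop(1)[OF R] unfolding n_def .
  have k0: "k \<noteq> 0" using a a0 by auto
  have nn: "n \<bullet> n \<noteq> 0" using n0 by simp
  have memR: "\<And>x. x \<in> R \<longleftrightarrow> n \<bullet> x = b" using pa_mem[OF R] unfolding n_def b_def by blast
  have memR': "\<And>x. x \<in> R' \<longleftrightarrow> k * (n \<bullet> x) = b'" using pa_mem[OF R'] a unfolding a_def b'_def by simp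
  define v where "v = ((b' / k - b) / (n \<bullet> n)) *\<^sub>R n"
  have nv: "n \<bullet> v = b' / k - b" using nn by (simp add: v_def)
  have "R' = (\<lambda>x. v + x) ` R"
  proof
    show "R' \<subseteq> (\<lambda>x. v + x) ` R"
    proof
      fix x assume "x \<in> R'"
      then have "k * (n \<bullet> x) = b'" using memR' by blast
      then have "n \<bullet> x = b' / k" using k0 by (simp add: field_simps)
      then have "x - v \<in> R" using memR nv by (simp add: inner_diff_right)
      then show "x \<in> (\<lambda>x. v + x) ` R" by (metis add.commute diff_add_cancel image_eqI)
    qed
    show "(\<lambda>x. v + x) ` R \<subseteq> R'"
    proof
      fix y assume "y \<in> (\<lambda>x. v + x) ` R"
      then obtain x where x: "x \<in> R" "y = v + x" by blast
      then have "n \<bullet> y = b' / k" using memR nv by (simp add: inner_add_right)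
      then have "k * (n \<bullet> y) = b'" using k0 by simp
      then show "y \<in> R'" using memR' by blast
    qed
  qed
  then show False using np unfolding parallel_planes_def by blast
qed

lemma dense_off_LL:
  assumes fin: "finite Pl" and pl: "\<forall>R'\<in>Pl. is_plane R'" and R: "is_plane R"
    and w: "w \<in> R" and rho: "\<rho> > 0"
  shows "\<exists>y. y \<in> R \<and> dist w y < \<rho> \<and> y \<notin> LL Pl R"
proof -
  define N where "N = {R'\<in>Pl. \<not> parallel_planes R R'}"
  define n where "n = fst (pa R)"
  define b where "b = snd (pa R)"
  have n0: "n \<noteq> 0" using pa_prop(1)[OF R] unfolding n_def .
  have nn: "n \<bullet> n \<noteq> 0" using n0 by simp
  have memR: "\<And>x. x \<in> R \<longleftrightarrow> n \<bullet> x = b" using pa_mem[OF R] unfolding n_def b_def by blast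
  define A where "A = (\<lambda>R'. fst (pa R'))"
  define B where "B = (\<lambda>R'. snd (pa R'))"
  define k where "k = (\<lambda>R'. (A R' \<bullet> n) / (n \<bullet> n))"
  define c where "c = (\<lambda>R'. A R' - k R' *\<^sub>R n)"
  define d where "d = (\<lambda>R'. B R' - k R' * b)"
  have cnz: "\<And>R'. R' \<in> N \<Longrightarrow> c R' \<noteq> 0"
    using nonparallel_nz[OF R] pl unfolding N_def c_def k_def A_def n_def by blast
  define V where "V = \<Union>((\<lambda>R'. {x. c R' \<bullet> x = d R'}) ` N)"
  have "negligible V" unfolding V_def
    using fin cnz by (intro negligible_Union) (auto simp: N_def intro!: negligible_hyperplane)
  moreover have "\<not> negligible (ball w \<rho>)" using rho by (intro open_not_negligible) auto
  ultimately have "\<not> ball w \<rho> \<subseteq> V" using negligible_subset by blast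
  then obtain x where x: "x \<in> ball w \<rho>" "x \<notin> V" by blast
  define t where "t = (n \<bullet> x - b) / (n \<bullet> n)"
  define y where "y = x - t *\<^sub>R n"
  have yR: "y \<in> R" unfolding memR y_def t_def using nn by (simp add: inner_diff_right)
  have nw: "n \<bullet> w = b" using memR w by blast
  have "t = (n \<bullet> (x - w)) / (n \<bullet> n)" unfolding t_def using nw by (simp add: inner_diff_right)
  then have e: "y - w = (x - w) - ((n \<bullet> (x - w)) / (n \<bullet> n)) *\<^sub>R n" unfolding y_def by (simp add: algebra_simps)
  have "norm (y - w) \<le> norm (x - w)" by (subst e) (rule proj_le[OF n0])
  then have dy: "dist w y < \<rho>" using x(1) by (simp add: dist_norm norm_minus_commute)
  have "y \<notin> LL Pl R"
  proof
    assume "y \<in> LL Pl R"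
    then obtain R' where R': "R' \<in> Pl" "\<not> parallel_planes R R'" "y \<in> R'" unfolding LL_mem by blast
    have RN: "R' \<in> N" using R' unfolding N_def by blast
    have "A R' \<bullet> y = B R'" using pa_mem R' pl unfolding A_def B_def by blast
    moreover have "c R' \<bullet> x - d R' = A R' \<bullet> y - B R'"
      unfolding c_def d_def y_def k_def t_def using nn
      by (simp add: inner_diff_left inner_diff_right inner_commute field_simps)
    ultimately have "x \<in> V" unfolding V_def using RN by auto
    then show False using x by blast
  qed
  then show ?thesis using yR dy by blast
qed

lemma face_in_plane: "F \<subseteq> plane_of F"
  unfolding plane_of_def by (rule hull_subset)

lemma face_plane_poly:
  assumes P: "polyhedron P" and F: "F \<in> faces P"
    and fr: "frontier P = \<Union>Fs"
    and a: "\<forall>Q\<in>Fs. closed Q \<and> aff_dim Q = 2 \<and> Q = closure (rel_interior Q)"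
  shows "\<exists>Q\<in>Fs. affine hull Q = plane_of F"
proof -
  obtain K where K: "K \<in> components (flat_points P)" "\<forall>z\<in>K. \<exists>r. GG P z (plane_of F) r"
    "is_plane (plane_of F)"
    using face_facts[OF P F] by blast
  obtain z where z: "z \<in> K" using in_components_nonempty[OF K(1)] by blast
  obtain r where r: "GG P z (plane_of F) r" using K z by blast
  have "z \<in> frontier P" using in_components_subset[OF K(1)] z unfolding flat_points_def by blast
  then obtain Q where Q: "Q \<in> Fs" "z \<in> Q" using fr by blast
  have rp: "r > 0" using r unfolding GG_def by blast
  have "z \<in> closure (rel_interior Q)" using a Q by blast
  then obtain w where w: "w \<in> rel_interior Q" "dist w z < r" using rp unfolding closure_approachable by blast
  then obtain e where e: "e > 0" "ball w e \<inter> affine hull Q \<subseteq> Q" unfolding mem_rel_interior_ball by blast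
  define \<delta> where "\<delta> = min e (r - dist z w)"
  have d: "\<delta> > 0" using e w by (simp add: \<delta>_def dist_commute)
  have "ball w \<delta> \<inter> affine hull Q \<subseteq> plane_of F"
  proof
    fix x assume x: "x \<in> ball w \<delta> \<inter> affine hull Q"
    then have xQ: "x \<in> Q" using e by (auto simp: \<delta>_def)
    have "dist z x \<le> dist z w + dist w x" by (rule dist_triangle)
    then have "x \<in> ball z r" using x by (simp add: \<delta>_def)
    moreover have "x \<in> frontier P" using xQ Q fr by blast
    ultimately show "x \<in> plane_of F" using r unfolding GG_def by blast
  qed
  moreover have "is_plane (affine hull Q)" using a Q aff_dim2_plane by blast
  moreover have "w \<in> affine hull Q"
  proof -
    have "w \<in> Q" using w(1) rel_interior_subset by blast
    then show ?thesis by (rule hull_inc)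
  qed
  ultimately have "affine hull Q = plane_of F" using plane_unique[OF _ K(3) _ d] by blast
  then show ?thesis using Q by blast
qed

lemma scene_planes_facts:
  assumes fin: "finite S" and poly: "\<forall>P\<in>S. polyhedron P"
  shows "finite (scene_planes S)" "\<forall>R\<in>scene_planes S. is_plane R"
proof -
  define FS where "FS = (\<lambda>P :: point set. SOME Fs :: point set set. finite Fs \<and> frontier P = \<Union>Fs \<and>
     (\<forall>Q\<in>Fs. closed Q \<and> aff_dim Q = 2 \<and> Q = closure (rel_interior Q)) \<and>
     (\<forall>Q\<in>Fs. \<forall>Q'\<in>Fs. Q \<noteq> Q' \<longrightarrow> rel_interior Q \<inter> Q' = {}))"
  have FS: "finite (FS P) \<and> frontier P = \<Union>(FS P) \<and>
     (\<forall>Q\<in>FS P. closed Q \<and> aff_dim Q = 2 \<and> Q = closure (rel_interior Q))" if "P \<in> S" for P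
  proof -
    have "finite (FS P) \<and> frontier P = \<Union>(FS P) \<and>
     (\<forall>Q\<in>FS P. closed Q \<and> aff_dim Q = 2 \<and> Q = closure (rel_interior Q)) \<and>
     (\<forall>Q\<in>FS P. \<forall>Q'\<in>FS P. Q \<noteq> Q' \<longrightarrow> rel_interior Q \<inter> Q' = {})"
      unfolding FS_def by (rule someI_ex[OF poly_struct[OF bspec[OF poly that]]])
    then show ?thesis by (elim conjE) (intro conjI)
  qed
  have "scene_planes S \<subseteq> (\<Union>P\<in>S. (\<lambda>Q. affine hull Q) ` FS P)"
  proof
    fix R assume "R \<in> scene_planes S"
    then obtain P F where PF: "P \<in> S" "F \<in> faces P" "R = plane_of F" unfolding scene_planes_def by blast
    have "\<exists>Q\<in>FS P. affine hull Q = plane_of F"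
      using face_plane_poly[of P F "FS P"] PF poly FS[OF PF(1)] by blast
    then show "R \<in> (\<Union>P\<in>S. (\<lambda>Q. affine hull Q) ` FS P)" using PF by force
  qed
  moreover have "finite (\<Union>P\<in>S. (\<lambda>Q. affine hull Q) ` FS P)" using fin FS by auto
  ultimately show "finite (scene_planes S)" by (rule finite_subset)
  show "\<forall>R\<in>scene_planes S. is_plane R"
    unfolding scene_planes_def using face_facts poly by blast
qed

lemma local_claim:
  assumes fin: "finite S" and poly: "\<forall>P\<in>S. polyhedron P"
    and PS: "P \<in> S" and F: "F \<in> faces P"
    and y: "y \<in> F" "y \<notin> LL (scene_planes S) (plane_of F)"
  shows "\<exists>\<delta>>0. ball y \<delta> \<inter> plane_of F \<subseteq> F"
proof -
  define R where "R = plane_of F"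
  have P: "polyhedron P" using poly PS by blast
  obtain K where K: "K \<in> components (flat_points P)" "F = closure K" "is_plane R"
     "K \<subseteq> R" "\<forall>z\<in>K. \<exists>r>0. ball z r \<inter> R \<subseteq> K" "F \<subseteq> frontier P"
    using face_facts[OF P F] unfolding R_def by blast
  have yf: "y \<in> frontier P" using K y by blast
  show ?thesis
  proof (cases "y \<in> flat_points P")
    case True
    obtain H r where Hr: "GG P y H r" using flat_G[OF poly_basic(1,2)[OF P] True] by blast
    have rp: "r > 0" and Hp: "is_plane H" using Hr unfolding GG_def by blast+
    have "y \<in> closure K" using K y by blast
    then obtain w where w: "w \<in> K" "dist w y < r" using rp unfolding closure_approachable by blast
    obtain r' where r': "r' > 0" "ball w r' \<inter> R \<subseteq> K" using K w by blast
    define d where "d = min r' (r - dist y w)"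
    have d: "d > 0" using r' w by (simp add: d_def dist_commute)
    have "ball w d \<inter> R \<subseteq> H"
    proof
      fix x assume x: "x \<in> ball w d \<inter> R"
      then have "x \<in> K" using r' by (auto simp: d_def)
      then have "x \<in> frontier P" using in_components_subset[OF K(1)] unfolding flat_points_def by blast
      moreover have "dist y x \<le> dist y w + dist w x" by (rule dist_triangle)
      then have "x \<in> ball y r" using x by (simp add: d_def)
      ultimately show "x \<in> H" using Hr unfolding GG_def by blast
    qed
    then have RH: "R = H" using plane_unique[OF K(3) Hp _ d] w K(4) by blast
    have "ball y r \<inter> R \<subseteq> flat_points P" using G_flat[OF Hr] Hr RH unfolding GG_def by blast
    moreover have "connected (ball y r \<inter> R)"
      using plane_props(3)[OF K(3)] by (intro convex_connected convex_Int convex_ball)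
    moreover have "K \<inter> (ball y r \<inter> R) \<noteq> {}" using w K(4) by (auto simp: dist_commute)
    ultimately have "ball y r \<inter> R \<subseteq> K" using components_maximal[OF K(1)] by blast
    then have "ball y r \<inter> R \<subseteq> F" using K(2) closure_subset by blast
    then show ?thesis using rp unfolding R_def by blast
  next
    case False
    obtain F' where F': "F' \<in> faces P" "y \<in> plane_of F'" "plane_of F' \<noteq> R"
      using nonflat_line[OF P yf False K(3)] by blast
    have inS: "plane_of F' \<in> scene_planes S" using F' PS unfolding scene_planes_def by blast
    have yR: "y \<in> R" using y face_in_plane unfolding R_def by blast
    have "\<not> parallel_planes R (plane_of F')"
      using parallel_meet[OF K(3) _ yR F'(2)] F'(3) by blast
    then have "y \<in> LL (scene_planes S) R" unfolding LL_mem using inS yR F'(2) by blast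
    then show ?thesis using y unfolding R_def by blast
  qed
qed

lemma key_claim:
  assumes fin: "finite S" and poly: "\<forall>P\<in>S. polyhedron P"
    and PS: "P \<in> S" and F: "F \<in> faces P"
    and C: "C \<in> cells (scene_planes S) (plane_of F)" and p: "p \<in> C" "p \<in> F"
  shows "C \<subseteq> F"
proof -
  define R where "R = plane_of F"
  define Pl where "Pl = scene_planes S"
  have P: "polyhedron P" using poly PS by blast
  have Fc: "closed F" using face_facts[OF P F] by (meson compact_imp_closed)
  have CR: "C \<subseteq> R - LL Pl R" using cell_basic(2)[OF C] unfolding R_def Pl_def .
  have cC: "connected C" using cell_basic(1)[OF C] .
  define Op where "Op = \<Union>{ball y \<delta> | y \<delta>. \<delta> > 0 \<and> ball y \<delta> \<inter> R \<subseteq> F}"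
  have "openin (top_of_set C) (C \<inter> F)"
    unfolding openin_open
  proof (intro exI conjI)
    show "open Op" unfolding Op_def by auto
    show "C \<inter> F = C \<inter> Op"
    proof
      show "C \<inter> F \<subseteq> C \<inter> Op"
      proof
        fix y assume y: "y \<in> C \<inter> F"
        then have "y \<notin> LL Pl R" using CR by blast
        then obtain \<delta> where "\<delta> > 0" "ball y \<delta> \<inter> R \<subseteq> F"
          using local_claim[OF fin poly PS F] y unfolding R_def Pl_def by blast
        moreover have "y \<in> ball y \<delta>" using calculation by simp
        ultimately show "y \<in> C \<inter> Op" using y unfolding Op_def by blast
      qed
      show "C \<inter> Op \<subseteq> C \<inter> F"
      proof
        fix x assume x: "x \<in> C \<inter> Op"
        then obtain y \<delta> where "x \<in> ball y \<delta>" "ball y \<delta> \<inter> R \<subseteq> F" unfolding Op_def by blast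
        moreover have "x \<in> R" using x CR by blast
        ultimately show "x \<in> C \<inter> F" using x by blast
      qed
    qed
  qed
  moreover have "closedin (top_of_set C) (C \<inter> F)" using Fc by (simp add: closedin_closed_Int)
  ultimately have "C \<inter> F = {} \<or> C \<inter> F = C" using cC unfolding connected_clopen by blast
  then show ?thesis using p by blast
qed

theorem mainTheorem2:
  fixes S :: "point set set"
  assumes "finite S" and "\<forall>P\<in>S. polyhedron P"
  shows "\<exists>\<epsilon>>0. \<forall>M :: (point \<times> point set) set.
           finite M \<and>
           (\<forall>(p, R)\<in>M. \<exists>P\<in>S. \<exists>F\<in>faces P. p \<in> F \<and> R = plane_of F) \<and>
           (\<forall>P\<in>S. \<forall>F\<in>faces P. \<forall>x\<in>F. \<exists>(p, R)\<in>M. p \<in> F \<and> R = plane_of F \<and> dist x p < \<epsilon>)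
           \<longrightarrow>
           snd ` M = scene_planes S \<and>
           \<Union>{F | P F. P \<in> S \<and> F \<in> faces P} =
           \<Union>{closure C | R C. R \<in> scene_planes S \<and> C \<in> cells (scene_planes S) R \<and> bounded C \<and>
                              (\<exists>p. (p, R) \<in> M \<and> p \<in> C)}"
proof -
  note fin = assms(1) and poly = assms(2)
  have finPl: "finite (scene_planes S)" and plPl: "\<forall>R\<in>scene_planes S. is_plane R"
    using scene_planes_facts[OF fin poly] by blast+
  define X where "X = Sigma (scene_planes S) (\<lambda>R. cells (scene_planes S) R)"
  have finX: "finite X" unfolding X_def using finPl cells_finite[OF finPl plPl] plPl
    by (intro finite_SigmaI) auto
  have radex: "\<exists>\<delta>. \<delta> > 0 \<and> (\<exists>c\<in>snd x. ball c \<delta> \<inter> fst x \<subseteq> snd x)" if x: "x \<in> X" for x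
  proof -
    obtain R C where RC: "x = (R, C)" "R \<in> scene_planes S" "C \<in> cells (scene_planes S) R"
      using x unfolding X_def by blast
    obtain c where c: "c \<in> C" using cell_basic(3)[OF RC(3)] by blast
    obtain \<delta> where "\<delta> > 0" "ball c \<delta> \<inter> R \<subseteq> C"
      using cell_open[OF finPl plPl _ RC(3) c] plPl RC(2) by blast
    then show ?thesis using RC c by auto
  qed
  define rad where "rad = (\<lambda>x :: point set \<times> point set. SOME \<delta>. \<delta> > 0 \<and> (\<exists>c\<in>snd x. ball c \<delta> \<inter> fst x \<subseteq> snd x))"
  have rad: "rad x > 0 \<and> (\<exists>c\<in>snd x. ball c (rad x) \<inter> fst x \<subseteq> snd x)" if "x \<in> X" for x
    unfolding rad_def by (rule someI_ex[OF radex[OF that]])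
  define \<epsilon> where "\<epsilon> = Min (insert 1 (rad ` X))"
  have epos: "\<epsilon> > 0" unfolding \<epsilon>_def using finX rad by (subst Min_gr_iff) auto
  have ele: "\<epsilon> \<le> rad x" if "x \<in> X" for x unfolding \<epsilon>_def using finX that by (intro Min_le) auto
  show ?thesis
  proof (rule exI[of _ \<epsilon>], intro conjI allI impI)
    show "\<epsilon> > 0" by (rule epos)
    fix M :: "(point \<times> point set) set"
    assume hyp: "finite M \<and>
           (\<forall>(p, R)\<in>M. \<exists>P\<in>S. \<exists>F\<in>faces P. p \<in> F \<and> R = plane_of F) \<and>
           (\<forall>P\<in>S. \<forall>F\<in>faces P. \<forall>x\<in>F. \<exists>(p, R)\<in>M. p \<in> F \<and> R = plane_of F \<and> dist x p < \<epsilon>)"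
    have h2: "\<forall>(p, R)\<in>M. \<exists>P\<in>S. \<exists>F\<in>faces P. p \<in> F \<and> R = plane_of F" using hyp by (elim conjE)
    have h3: "\<forall>P\<in>S. \<forall>F\<in>faces P. \<forall>x\<in>F. \<exists>(p, R)\<in>M. p \<in> F \<and> R = plane_of F \<and> dist x p < \<epsilon>"
      using hyp by (elim conjE)
    have m1: "\<exists>P\<in>S. \<exists>F\<in>faces P. p \<in> F \<and> R = plane_of F" if "(p, R) \<in> M" for p R
      using bspec[OF h2 that] by simp
    have m2: "\<exists>p. (p, plane_of F) \<in> M \<and> p \<in> F \<and> dist x p < \<epsilon>"
      if PFx: "P \<in> S" "F \<in> faces P" "x \<in> F" for P F x
    proof -
      obtain pr where pr: "pr \<in> M" "case pr of (p, R) \<Rightarrow> p \<in> F \<and> R = plane_of F \<and> dist x p < \<epsilon>"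
        using bspec[OF bspec[OF bspec[OF h3 PFx(1)] PFx(2)] PFx(3)] by blast
      obtain p R where "pr = (p, R)" by (cases pr)
      then show ?thesis using pr by auto
    qed
    show "snd ` M = scene_planes S"
    proof
      show "snd ` M \<subseteq> scene_planes S"
      proof
        fix R assume "R \<in> snd ` M"
        then obtain p where "(p, R) \<in> M" by force
        then show "R \<in> scene_planes S" using m1 unfolding scene_planes_def by blast
      qed
      show "scene_planes S \<subseteq> snd ` M"
      proof
        fix R assume "R \<in> scene_planes S"
        then obtain P F where PF: "P \<in> S" "F \<in> faces P" "R = plane_of F" unfolding scene_planes_def by blast
        have "F \<noteq> {}" using face_facts[OF bspec[OF poly PF(1)] PF(2)] by blast
        then obtain x where "x \<in> F" by blast
        then obtain p where "(p, plane_of F) \<in> M" using m2 PF by blast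
        then show "R \<in> snd ` M" using PF by force
      qed
    qed
    show "\<Union>{F | P F. P \<in> S \<and> F \<in> faces P} =
           \<Union>{closure C | R C. R \<in> scene_planes S \<and> C \<in> cells (scene_planes S) R \<and> bounded C \<and>
                              (\<exists>p. (p, R) \<in> M \<and> p \<in> C)}"
    proof
      show "\<Union>{F | P F. P \<in> S \<and> F \<in> faces P} \<subseteq>
           \<Union>{closure C | R C. R \<in> scene_planes S \<and> C \<in> cells (scene_planes S) R \<and> bounded C \<and>
                              (\<exists>p. (p, R) \<in> M \<and> p \<in> C)}"
      proof
        fix x assume "x \<in> \<Union>{F | P F. P \<in> S \<and> F \<in> faces P}"
        then obtain P F where PF: "P \<in> S" "F \<in> faces P" "x \<in> F" by blast
        define R where "R = plane_of F"
        have P: "polyhedron P" using poly PF by blast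
        have Rin: "R \<in> scene_planes S" using PF unfolding scene_planes_def R_def by blast
        have Rp: "is_plane R" using plPl Rin by blast
        obtain K where K: "F = closure K" "K \<subseteq> R" "\<forall>z\<in>K. \<exists>r>0. ball z r \<inter> R \<subseteq> K" "compact F"
          using face_facts[OF P PF(2)] unfolding R_def by blast
        define CS where "CS = {C \<in> cells (scene_planes S) R. C \<subseteq> F}"
        have finCS: "finite CS" unfolding CS_def using cells_finite[OF finPl plPl Rp] by simp
        have "\<exists>C\<in>CS. x \<in> closure C"
        proof (rule ccontr)
          assume na: "\<not> (\<exists>C\<in>CS. x \<in> closure C)"
          have dex: "\<exists>\<delta>. \<delta> > 0 \<and> ball x \<delta> \<inter> C = {}" if CC: "C \<in> CS" for C
          proof -
            obtain \<delta> where "\<delta> > 0" "ball x \<delta> \<inter> closure C = {}"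
              using avoid_closed[of "closure C" x] na CC by auto
            then show ?thesis using closure_subset by blast
          qed
          define dC where "dC = (\<lambda>C :: point set. SOME \<delta>. \<delta> > 0 \<and> ball x \<delta> \<inter> C = {})"
          have dC: "dC C > 0 \<and> ball x (dC C) \<inter> C = {}" if "C \<in> CS" for C
            unfolding dC_def by (rule someI_ex[OF dex[OF that]])
          define \<delta> where "\<delta> = Min (insert 1 (dC ` CS))"
          have dpos: "\<delta> > 0" unfolding \<delta>_def using finCS dC by (subst Min_gr_iff) auto
          have dle: "\<delta> \<le> dC C" if "C \<in> CS" for C unfolding \<delta>_def using finCS that by (intro Min_le) auto
          have "x \<in> closure K" using K PF by blast
          then obtain w where w: "w \<in> K" "dist w x < \<delta> / 2"
            using dpos unfolding closure_approachable by (meson half_gt_zero)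
          obtain r' where r': "r' > 0" "ball w r' \<inter> R \<subseteq> K" using K w by blast
          define \<rho> where "\<rho> = min r' (\<delta> / 2)"
          have rho: "\<rho> > 0" using r' dpos by (simp add: \<rho>_def)
          obtain y where y: "y \<in> R" "dist w y < \<rho>" "y \<notin> LL (scene_planes S) R"
            using dense_off_LL[OF finPl plPl Rp _ rho] w K by blast
          have "y \<in> K" using y r' by (auto simp: \<rho>_def)
          then have yF: "y \<in> F" using K closure_subset by blast
          obtain C where C: "C \<in> cells (scene_planes S) R" "y \<in> C" using cell_exists y by blast
          have "C \<subseteq> F" using key_claim[OF fin poly PF(1,2)] C yF unfolding R_def by blast
          then have CS: "C \<in> CS" using C unfolding CS_def by blast
          have "dist x y \<le> dist x w + dist w y" by (rule dist_triangle)
          also have "\<dots> < \<delta>" using w y by (simp add: \<rho>_def dist_commute)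
          also have "\<dots> \<le> dC C" using dle CS by blast
          finally have "y \<in> ball x (dC C) \<inter> C" using C by simp
          then show False using dC[OF CS] by blast
        qed
        then obtain C where C: "C \<in> cells (scene_planes S) R" "C \<subseteq> F" "x \<in> closure C"
          unfolding CS_def by blast
        have bC: "bounded C" using C K by (meson bounded_subset compact_imp_bounded)
        have "(R, C) \<in> X" unfolding X_def using Rin C by blast
        then obtain c where c: "c \<in> C" "ball c (rad (R, C)) \<inter> R \<subseteq> C" and el: "\<epsilon> \<le> rad (R, C)"
          using rad ele by fastforce
        obtain p where p: "(p, R) \<in> M" "p \<in> F" "dist c p < \<epsilon>" using m2[OF PF(1,2), of c] c C unfolding R_def by blast
        have "p \<in> R" using p face_in_plane unfolding R_def by blast
        then have "p \<in> C" using c p el by auto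
        then show "x \<in> \<Union>{closure C | R C. R \<in> scene_planes S \<and> C \<in> cells (scene_planes S) R \<and> bounded C \<and>
                              (\<exists>p. (p, R) \<in> M \<and> p \<in> C)}"
          using Rin C bC p by blast
      qed
      show "\<Union>{closure C | R C. R \<in> scene_planes S \<and> C \<in> cells (scene_planes S) R \<and> bounded C \<and>
                              (\<exists>p. (p, R) \<in> M \<and> p \<in> C)} \<subseteq> \<Union>{F | P F. P \<in> S \<and> F \<in> faces P}"
      proof
        fix x assume "x \<in> \<Union>{closure C | R C. R \<in> scene_planes S \<and> C \<in> cells (scene_planes S) R \<and> bounded C \<and>
                              (\<exists>p. (p, R) \<in> M \<and> p \<in> C)}"
        then obtain R C p where RC: "C \<in> cells (scene_planes S) R" "(p, R) \<in> M" "p \<in> C" "x \<in> closure C"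
          by blast
        obtain P F where PF: "P \<in> S" "F \<in> faces P" "p \<in> F" "R = plane_of F" using m1[OF RC(2)] by blast
        have "C \<subseteq> F" using key_claim[OF fin poly PF(1,2)] RC PF by blast
        moreover have "closed F" using face_facts[OF bspec[OF poly PF(1)] PF(2)] by (meson compact_imp_closed)
        ultimately have "closure C \<subseteq> F" by (rule closure_minimal)
        then show "x \<in> \<Union>{F | P F. P \<in> S \<and> F \<in> faces P}" using RC PF by blast
      qed
    qed
  qed
qed

end
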